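(* Let $G=C_{2n}(a,n)$ with $a\in\{1,2\}$ be a connected cubic circulant graph, and let $\Delta$ be an odd cycle in $G$ (a cycle subgraph of $G$ of odd length). Then $N_G(V(\Delta))=V(G)$.
   Context: For integers $1\le a<n$, $C_{2n}(a,n)$ is the simple graph on vertex set $[2n]$ in which distinct vertices $i,j$ are adjacent iff $|i-j|\in\{a,n,2n-a\}$. For a set $U$ of vertices, $N_G(U)=\{v\in V(G)\mid \{u,v\}\in E(G)\text{ for some }u\in U\}$. *)

theory Defs
  imports Main
begin

definition circ_verts :: "nat \<Rightarrow> nat set" where
  "circ_verts n = {1..2*n}"

definition circ_adj :: "nat \<Rightarrow> nat \<Rightarrow> nat \<Rightarrow> nat \<Rightarrow> bool" where
  "circ_adj n a i j \<longleftrightarrow> i \<in> circ_verts n \<and> j \<in> circ_verts n \<and> i \<noteq> j \<and>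
     \<bar>int i - int j\<bar> \<in> {int a, int n, 2 * int n - int a}"

definition circ_nbhd :: "nat \<Rightarrow> nat \<Rightarrow> nat set \<Rightarrow> nat set" where
  "circ_nbhd n a U = {v \<in> circ_verts n. \<exists>u\<in>U. circ_adj n a u v}"

definition circ_connected :: "nat \<Rightarrow> nat \<Rightarrow> bool" where
  "circ_connected n a \<longleftrightarrow>
     (\<forall>i\<in>circ_verts n. \<forall>j\<in>circ_verts n. (circ_adj n a)\<^sup>*\<^sup>* i j)"

definition circ_cubic :: "nat \<Rightarrow> nat \<Rightarrow> bool" where
  "circ_cubic n a \<longleftrightarrow> (\<forall>i\<in>circ_verts n. card {j. circ_adj n a i j} = 3)"

definition circ_cycle :: "nat \<Rightarrow> nat \<Rightarrow> nat list \<Rightarrow> bool" where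
  "circ_cycle n a vs \<longleftrightarrow> length vs \<ge> 3 \<and> distinct vs \<and>
     (\<forall>k < length vs. circ_adj n a (vs ! k) (vs ! ((k + 1) mod length vs)))"

end

theory Submission
  imports Defs
begin

lemma step_decomp:
  fixes x y :: int and a n :: nat
  assumes "\<bar>x - y\<bar> \<in> {int a, int n, 2*int n - int a}"
  shows "\<exists>e w. e \<in> {-1,0,1::int} \<and> y - x = int a * e + int n * (1 - \<bar>e\<bar>) + 2 * int n * w"
proof -
  consider "y - x = int a" | "y - x = - int a" | "y - x = int n" | "y - x = - int n"
    | "y - x = 2*int n - int a" | "y - x = - (2*int n - int a)"
    using assms by (auto simp: abs_if split: if_splits)
  then show ?thesis
  proof cases
    case 1 then show ?thesis by (intro exI[of _ 1] exI[of _ 0]) simp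
  next
    case 2 then show ?thesis by (intro exI[of _ "-1"] exI[of _ 0]) simp
  next
    case 3 then show ?thesis by (intro exI[of _ 0] exI[of _ 0]) simp
  next
    case 4 then show ?thesis by (intro exI[of _ 0] exI[of _ "-1"]) simp
  next
    case 5 then show ?thesis by (intro exI[of _ "-1"] exI[of _ 1]) simp
  next
    case 6 then show ?thesis by (intro exI[of _ 1] exI[of _ "-1"]) simp
  qed
qed

lemma ivt:
  fixes f :: "nat \<Rightarrow> int"
  shows "\<forall>k<N. \<bar>f (Suc k) - f k\<bar> \<le> 1 \<Longrightarrow> f 0 \<le> x \<Longrightarrow> x \<le> f N \<Longrightarrow> \<exists>t\<le>N. f t = x"
proof (induction N)
  case 0 then show ?case by auto
next
  case (Suc N)
  show ?case
  proof (cases "x \<le> f N")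
    case True
    have "\<forall>k<N. \<bar>f (Suc k) - f k\<bar> \<le> 1" using Suc.prems(1) by auto
    with Suc.IH Suc.prems True obtain t where "t \<le> N" "f t = x" by auto
    then show ?thesis by (intro exI[of _ t]) auto
  next
    case False
    have "\<bar>f (Suc N) - f N\<bar> \<le> 1" using Suc.prems(1) by auto
    then have "f (Suc N) = x" using False Suc.prems(3) by auto
    then show ?thesis by auto
  qed
qed

lemma adj_sym: "circ_adj n a i j \<Longrightarrow> circ_adj n a j i"
  unfolding circ_adj_def by (auto simp: abs_minus_commute)

lemma parity_conn:
  assumes "a = 2" "even n"
  shows "(circ_adj n a)\<^sup>*\<^sup>* i j \<Longrightarrow> even i = even j"
proof (induction rule: rtranclp_induct)
  case base then show ?case by simp
next
  case (step y z)
  from step(2) have "\<bar>int y - int z\<bar> \<in> {2, int n, 2 * int n - 2}"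
    using assms by (simp add: circ_adj_def)
  moreover have "even (int n)" using assms by simp
  then have ev: "\<And>d::int. d \<in> {2, int n, 2*int n - 2} \<Longrightarrow> even d" by auto
  ultimately have "even \<bar>int y - int z\<bar>" by blast
  then have "even (int y - int z)" by simp
  then have "even y = even z" by (simp add: even_diff)
  with step show ?case by simp
qed

theorem lemma2p3:
  fixes n a :: nat and vs :: "nat list"
  assumes "1 \<le> a" and "a < n" and "a \<in> {1, 2}"
    and "circ_connected n a" and "circ_cubic n a"
    and "circ_cycle n a vs" and "odd (length vs)"
  shows "circ_nbhd n a (set vs) = circ_verts n"
proof -
  define L where "L = length vs"
  have L3: "L \<ge> 3" and dist: "distinct vs"
    and adjs: "\<forall>k<L. circ_adj n a (vs!k) (vs!((k+1) mod L))"
    using assms(6) by (auto simp: circ_cycle_def L_def)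
  have oddL: "odd L" using assms(7) L_def by simp
  define v where "v k = int (vs ! k)" for k
  define P where "P k e w \<longleftrightarrow> e \<in> {-1,0,1::int} \<and>
      v ((k+1) mod L) - v k = int a * e + int n * (1 - \<bar>e\<bar>) + 2 * int n * w" for k e w
  have ex: "\<exists>e w. P k e w" if "k < L" for k
  proof -
    have "circ_adj n a (vs!k) (vs!((k+1) mod L))" using adjs that by blast
    then have "\<bar>v k - v ((k+1) mod L)\<bar> \<in> {int a, int n, 2*int n - int a}"
      by (simp add: circ_adj_def v_def)
    from step_decomp[OF this] show ?thesis unfolding P_def .
  qed
  define E where "E k = (SOME e. \<exists>w. P k e w)" for k
  define W where "W k = (SOME w. P k (E k) w)" for k
  have EW0: "P k (E k) (W k)" if "k < L" for k
  proof -
    have "\<exists>w. P k (E k) w" unfolding E_def using someI_ex[OF ex[OF that]] .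
    then show ?thesis unfolding W_def by (rule someI_ex)
  qed
  have EW: "\<forall>k. k < L \<longrightarrow> (E k \<in> {-1,0,1::int} \<and>
      v ((k+1) mod L) - v k = int a * E k + int n * (1 - \<bar>E k\<bar>) + 2 * int n * W k)"
    using EW0 unfolding P_def by blast
  define Q where "Q t = (\<Sum>k<t. E k)" for t
  define K where "K t = (\<Sum>k<t. 1 - \<bar>E k\<bar>)" for t
  define WW where "WW t = (\<Sum>k<t. W k)" for t
  have pos: "t < L \<Longrightarrow> v t = v 0 + int a * Q t + int n * K t + 2 * int n * WW t" for t
  proof (induction t)
    case 0 show ?case by (simp add: Q_def K_def WW_def)
  next
    case (Suc t)
    then have tL: "t < L" and md: "(t+1) mod L = Suc t" by auto
    have "v ((t+1) mod L) - v t = int a * E t + int n * (1 - \<bar>E t\<bar>) + 2 * int n * W t"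
      using EW tL by blast
    then have "v (Suc t) - v t = int a * E t + int n * (1 - \<bar>E t\<bar>) + 2 * int n * W t"
      unfolding md .
    with Suc tL show ?case by (simp add: Q_def K_def WW_def algebra_simps)
  qed
  obtain L' where L': "L = Suc L'" using L3 by (cases L) auto
  have close: "0 = int a * Q L + int n * K L + 2 * int n * WW L"
  proof -
    have md: "(L' + 1) mod L = 0" using L' by simp
    have "L' < L" using L' by simp
    then have "v ((L'+1) mod L) - v L' = int a * E L' + int n * (1 - \<bar>E L'\<bar>) + 2 * int n * W L'"
      using EW by blast
    then have st: "v 0 - v L' = int a * E L' + int n * (1 - \<bar>E L'\<bar>) + 2 * int n * W L'"
      unfolding md .
    have "v L' = v 0 + int a * Q L' + int n * K L' + 2 * int n * WW L'"
      using pos[OF \<open>L' < L\<close>] .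
    with st show ?thesis by (simp add: L' Q_def K_def WW_def algebra_simps)
  qed
  have par: "t \<le> L \<Longrightarrow> even (Q t + K t + int t)" for t
  proof (induction t)
    case 0 show ?case by (simp add: Q_def K_def)
  next
    case (Suc t)
    then have "E t \<in> {-1,0,1}" using EW by auto
    then have "even (E t + (1 - \<bar>E t\<bar>) + 1)" by auto
    moreover have "even (Q t + K t + int t)" using Suc by simp
    ultimately have "even ((Q t + K t + int t) + (E t + (1 - \<bar>E t\<bar>) + 1))" by simp
    then show ?case by (simp add: Q_def K_def algebra_simps)
  qed
  have parL: "odd (Q L + K L)"
  proof
    assume "even (Q L + K L)"
    moreover have "even (Q L + K L + int L)" using par by simp
    ultimately have "even (int L)"
      by (simp add: even_add)
    with oddL show False by simp
  qed
  have n2: "n \<ge> 2" using assms by auto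
  obtain m where Qm: "Q L = int n * m" and oddm: "odd m"
  proof (cases "a = 1")
    case True
    define m where "m = - (K L + 2 * WW L)"
    have Qm: "Q L = int n * m" using close True by (simp add: m_def algebra_simps)
    have "odd m"
    proof (cases "even n")
      case True
      then have "even (Q L)" using Qm by simp
      then have "odd (K L)" using parL by simp
      then show ?thesis by (simp add: m_def)
    next
      case False
      then have "even (Q L) = even m" using Qm by simp
      moreover have "even m = even (K L)" by (simp add: m_def)
      ultimately show ?thesis using parL by simp
    qed
    with Qm that show ?thesis by blast
  next
    case False
    then have a2: "a = 2" using assms by auto
    have oddn: "odd n"
    proof
      assume en: "even n"
      have "1 \<in> circ_verts n" "2 \<in> circ_verts n" using n2 by (auto simp: circ_verts_def)
      then have "(circ_adj n a)\<^sup>*\<^sup>* 1 2" using assms(4) by (auto simp: circ_connected_def)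
      then have "even (1::nat) = even (2::nat)" using parity_conn[OF a2 en] by blast
      then show False by simp
    qed
    have "int n * K L = 2 * (- Q L - int n * WW L)" using close a2 by (simp add: algebra_simps)
    then have "even (int n * K L)" by simp
    then have "even (K L)" using oddn by simp
    then obtain j where j: "K L = 2 * j" by blast
    define m where "m = - (j + WW L)"
    have Qm: "Q L = int n * m" using close a2 j by (simp add: m_def algebra_simps)
    have "odd (Q L)" using parL j by simp
    then have "odd m" using Qm by simp
    with Qm that show ?thesis by blast
  qed
  have Qstep: "\<forall>k<L. \<bar>Q (Suc k) - Q k\<bar> \<le> 1"
  proof (intro allI impI)
    fix k assume "k < L"
    then have "E k \<in> {-1,0,1}" using EW by auto
    then show "\<bar>Q (Suc k) - Q k\<bar> \<le> 1" by (auto simp: Q_def)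
  qed
  have cover: "\<exists>t<L. \<exists>c. Q t = r + int n * c" if r: "0 \<le> r" "r < int n" for r
  proof (cases "m > 0")
    case True
    have nm: "int n \<le> int n * m" using True mult_left_mono[of 1 m "int n"] by simp
    then have "r \<le> Q L" using Qm r by linarith
    moreover have "Q 0 \<le> r" using r by (simp add: Q_def)
    ultimately obtain t where t: "t \<le> L" "Q t = r" using ivt[OF Qstep] by blast
    have "t \<noteq> L"
    proof
      assume "t = L"
      with t Qm have "r = int n * m" by simp
      with nm r show False by linarith
    qed
    then have "t < L" using t by simp
    moreover have "Q t = r + int n * 0" using t by simp
    ultimately show ?thesis by blast
  next
    case False
    define r' where "r' = (if r = 0 then 0 else int n - r)"
    define c where "c = (if r = 0 then 0 else - 1::int)"
    have r': "0 \<le> r'" "r' < int n" "- r' = r + int n * c" using r n2 by (auto simp: r'_def c_def)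
    have "m < 0" using oddm False by (cases "m = 0") auto
    then have nm: "int n \<le> int n * (-m)" using mult_left_mono[of 1 "-m" "int n"] by simp
    then have "r' \<le> - Q L" using Qm r' by linarith
    moreover have "- Q 0 \<le> r'" using r' by (simp add: Q_def)
    moreover have "\<forall>k<L. \<bar>(- Q (Suc k)) - (- Q k)\<bar> \<le> 1" using Qstep by auto
    ultimately obtain t where t: "t \<le> L" "- Q t = r'" using ivt[of L "\<lambda>t. - Q t" r'] by blast
    have "t \<noteq> L"
    proof
      assume "t = L"
      with t Qm have "r' = int n * (-m)" by simp
      with nm r' show False by linarith
    qed
    then have "t < L" using t by simp
    moreover have "Q t = r + int n * c" using t r' by linarith
    ultimately show ?thesis by blast
  qed
  have inV: "vs ! k \<in> circ_verts n" if "k < L" for k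
    using adjs that by (auto simp: circ_adj_def)
  show ?thesis
  proof
    show "circ_nbhd n a (set vs) \<subseteq> circ_verts n" by (auto simp: circ_nbhd_def)
  next
    show "circ_verts n \<subseteq> circ_nbhd n a (set vs)"
    proof
      fix u assume u: "u \<in> circ_verts n"
      show "u \<in> circ_nbhd n a (set vs)"
      proof (cases "u \<in> set vs")
        case True
        then obtain j where j: "j < L" "vs ! j = u" by (auto simp: L_def in_set_conv_nth)
        have "circ_adj n a (vs!((j+1) mod L)) u" using adjs j adj_sym by blast
        moreover have "vs!((j+1) mod L) \<in> set vs" using L3 unfolding L_def by (intro nth_mem mod_less_divisor) auto
        ultimately show ?thesis using u by (auto simp: circ_nbhd_def)
      next
        case False
        define x0 where "x0 = (if a = 1 then int u - v 0 else (int u - v 0) * ((int n + 1) div 2))"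
        have ax0: "int a * x0 = (int u - v 0) + int n * (if a = 1 then 0 else int u - v 0)"
        proof (cases "a = 1")
          case True then show ?thesis by (simp add: x0_def)
        next
          case False
          then have a2: "a = 2" using assms by auto
          have oddn: "odd n"
          proof
            assume en: "even n"
            have "1 \<in> circ_verts n" "2 \<in> circ_verts n" using n2 by (auto simp: circ_verts_def)
            then have "(circ_adj n a)\<^sup>*\<^sup>* 1 2" using assms(4) by (auto simp: circ_connected_def)
            then have "even (1::nat) = even (2::nat)" using parity_conn[OF a2 en] by blast
            then show False by simp
          qed
          then have "2 * ((int n + 1) div 2) = int n + 1" by presburger
          then show ?thesis using a2 by (simp add: x0_def algebra_simps)
        qed
        define r where "r = x0 mod int n"
        have "0 \<le> r" "r < int n" using n2 by (auto simp: r_def)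
        then obtain t c where t: "t < L" "Q t = r + int n * c" using cover by blast
        have "x0 = int n * (x0 div int n) + r" by (simp add: r_def)
        then have rr: "r = x0 - int n * (x0 div int n)" by simp
        have qt: "Q t = x0 - int n * (x0 div int n) + int n * c" using t(2) rr by simp
        have "int a * Q t = int a * x0 - int n * (int a * (x0 div int n)) + int n * (int a * c)"
          unfolding qt by (simp add: algebra_simps)
        then have "v t - int u = int n * ((if a = 1 then 0 else int u - v 0)
            - int a * (x0 div int n) + int a * c + K t + 2 * WW t)"
          using pos[OF t(1)] ax0 by (simp add: algebra_simps)
        then obtain q where q: "v t - int u = int n * q" by blast
        have vt: "vs ! t \<in> circ_verts n" using inV t by auto
        have ne: "vs ! t \<noteq> u" using False t by (auto simp: L_def)
        have b: "1 \<le> v t" "v t \<le> 2 * int n" "1 \<le> int u" "int u \<le> 2 * int n"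
          using vt u by (auto simp: circ_verts_def v_def)
        have "q \<noteq> 0" using q ne by (auto simp: v_def)
        moreover have "q < 2"
        proof (rule ccontr)
          assume "\<not> q < 2"
          then have "int n * 2 \<le> int n * q" by (intro mult_left_mono) auto
          then show False using q b by linarith
        qed
        moreover have "q > -2"
        proof (rule ccontr)
          assume "\<not> q > -2"
          then have "int n * q \<le> int n * (-2)" by (intro mult_left_mono) auto
          then show False using q b by linarith
        qed
        ultimately have "q = 1 \<or> q = -1" by auto
        then have "\<bar>int (vs ! t) - int u\<bar> = int n" using q by (auto simp: v_def)
        then have "circ_adj n a (vs ! t) u" using vt u ne by (simp add: circ_adj_def)
        moreover have "vs ! t \<in> set vs" using t by (simp add: L_def)
        ultimately show ?thesis using u by (auto simp: circ_nbhd_def)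
      qed
    qed
  qed
qed

end
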